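(* Let $G$ be a second countable locally compact abelian group, let $\varLambda\subseteq G$ be uniformly discrete, and let $\mathcal{A}=(A_n)_n$ be a van Hove sequence such that $\varLambda$ has positive density with respect to $\mathcal{A}$, i.e. $\liminf_{n\to\infty}\frac{\mathrm{card}(\varLambda\cap A_n)}{\mathrm{vol}(A_n)}>0$. Put $F_n=\varLambda\cap A_n$. (a) If $\gamma_{\mathrm{count}}$ is any vague cluster point of $(\gamma_{F_n})_n$, then there exist $C\in(0,\infty)$ and a vague cluster point $\gamma_{\mathrm{dens}}$ of $(\gamma_n)_n$ such that $\gamma_{\mathrm{dens}}=C\gamma_{\mathrm{count}}$. (b) If $\gamma_{\mathrm{dens}}$ is any vague cluster point of $(\gamma_n)_n$, then there exist $D\in(0,\infty)$ and a vague cluster point $\gamma_{\mathrm{count}}$ of $(\gamma_{F_n})_n$ such that $\gamma_{\mathrm{count}}=D\gamma_{\mathrm{dens}}$.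
   Context: $\mathrm{vol}$ is Haar measure. $\varLambda$ is uniformly discrete if there is a nonempty open $U\subseteq G$ such that every translate $t+U$ contains at most one point of $\varLambda$. A van Hove sequence is a sequence $(A_n)_n$ of compact sets of positive Haar measure with $\mathrm{vol}(\partial^K A_n)/\mathrm{vol}(A_n)\to0$ for every compact $K$, where $\partial^K A=((A+K)\setminus A^\circ)\cup((\overline{G\setminus A}-K)\cap A)$. For a finite set $F$, $\gamma_F=\frac{1}{\mathrm{card}(F)}\sum_{x,y\in F}\delta_{x-y}$ if $F\ne\emptyset$, $\gamma_\emptyset=0$; and $\gamma_n=\frac{1}{\mathrm{vol}(A_n)}\sum_{x,y\in F_n}\delta_{x-y}$. Cluster points are taken in the vague topology. *)

theory Defs
  imports "HOL-Analysis.Analysis"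
begin

text \<open>Haar measure on a locally compact abelian group: a nonzero Borel measure that is
  translation invariant, finite on compact sets and positive on nonempty open sets.
  (In a second countable locally compact Hausdorff space every Borel measure that is
  finite on compact sets is regular, so no extra regularity clause is needed.)\<close>
definition haar_measure :: "'a::{topological_ab_group_add,t2_space} measure \<Rightarrow> bool" where
  "haar_measure vol \<longleftrightarrow>
     sets vol = sets borel \<and>
     (\<forall>B \<in> sets borel. \<forall>x. emeasure vol ((\<lambda>y. x + y) ` B) = emeasure vol B) \<and>
     (\<forall>K. compact K \<longrightarrow> emeasure vol K < \<infinity>) \<and>
     (\<forall>U. open U \<and> U \<noteq> {} \<longrightarrow> emeasure vol U > 0)"

definition uniformly_discrete :: "'a::{topological_ab_group_add} set \<Rightarrow> bool" where
  "uniformly_discrete L \<longleftrightarrow>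
     (\<exists>U. open U \<and> U \<noteq> {} \<and>
        (\<forall>t. \<forall>x\<in>L. \<forall>y\<in>L. x \<in> (\<lambda>u. t + u) ` U \<and> y \<in> (\<lambda>u. t + u) ` U \<longrightarrow> x = y))"

definition K_boundary :: "'a::topological_ab_group_add set \<Rightarrow> 'a set \<Rightarrow> 'a set" where
  "K_boundary K A =
     ({a + k | a k. a \<in> A \<and> k \<in> K} - interior A) \<union>
     ({z - k | z k. z \<in> closure (UNIV - A) \<and> k \<in> K} \<inter> A)"

definition van_Hove :: "'a::topological_ab_group_add measure \<Rightarrow> (nat \<Rightarrow> 'a set) \<Rightarrow> bool" where
  "van_Hove vol A \<longleftrightarrow>
     (\<forall>n. compact (A n) \<and> emeasure vol (A n) > 0) \<and>
     (\<forall>K. compact K \<longrightarrow>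
        (\<lambda>n. measure vol (K_boundary K (A n)) / measure vol (A n)) \<longlonglongrightarrow> 0)"

text \<open>The finite autocorrelation measure with counting normalisation,
  (1 / card F) * sum over x,y in F of the Dirac measure at x - y (zero if F is empty).\<close>
definition gamma_count :: "'a::topological_ab_group_add set \<Rightarrow> 'a measure" where
  "gamma_count F =
     scale_measure (ennreal (1 / real (card F)))
       (distr (count_space (F \<times> F)) borel (\<lambda>(x, y). x - y))"

definition gamma_dens :: "'a::topological_ab_group_add measure \<Rightarrow> 'a set \<Rightarrow> 'a set \<Rightarrow> 'a measure" where
  "gamma_dens vol A F =
     scale_measure (ennreal (1 / measure vol A))
       (distr (count_space (F \<times> F)) borel (\<lambda>(x, y). x - y))"

definition Cc :: "('a::topological_space \<Rightarrow> real) set" where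
  "Cc = {f. continuous_on UNIV f \<and> compact (closure {x. f x \<noteq> 0})}"

definition radon :: "'a::topological_space measure \<Rightarrow> bool" where
  "radon M \<longleftrightarrow> sets M = sets borel \<and> (\<forall>K. compact K \<longrightarrow> emeasure M K < \<infinity>)"

text \<open>mu is a cluster point of the sequence mus in the vague topology, i.e. every basic
  vague neighbourhood of mu (given by finitely many test functions and an epsilon)
  contains mus n for infinitely many n.\<close>
definition vague_cluster_point :: "(nat \<Rightarrow> 'a::topological_space measure) \<Rightarrow> 'a measure \<Rightarrow> bool" where
  "vague_cluster_point mus mu \<longleftrightarrow>
     radon mu \<and>
     (\<forall>Fs. finite Fs \<and> Fs \<subseteq> Cc \<longrightarrow> (\<forall>\<epsilon>>0. \<forall>N. \<exists>n\<ge>N.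
        \<forall>f\<in>Fs. \<bar>integral\<^sup>L (mus n) f - integral\<^sup>L mu f\<bar> < \<epsilon>))"

end

theory Submission imports Defs begin

lemma integral_scale_ennreal:
  fixes f :: "'b \<Rightarrow> real"
  assumes "0 \<le> r" "f \<in> borel_measurable M"
  shows "integral\<^sup>L (scale_measure (ennreal r) M) f = r * integral\<^sup>L M f"
proof -
  have eq: "scale_measure (ennreal r) M = density M (\<lambda>_. ennreal r)"
  proof (rule measure_eqI)
    fix X assume "X \<in> sets (scale_measure (ennreal r) M)"
    then have X: "X \<in> sets M" by simp
    show "emeasure (scale_measure (ennreal r) M) X = emeasure (density M (\<lambda>_. ennreal r)) X"
      using X by (simp add: emeasure_density nn_integral_cmult_indicator)
  qed simp
  show ?thesis unfolding eq
    using assms by (simp add: integral_density)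
qed

lemma open_neg_tg:
  fixes U :: "'a::topological_ab_group_add set"
  assumes "open U" shows "open (uminus ` U)"
proof -
  have "uminus ` U = uminus -` U" by force
  moreover have "open (uminus -` U)"
    by (rule open_vimage[OF assms]) (intro continuous_intros)
  ultimately show ?thesis by simp
qed

lemma closed_diff_compact:
  fixes S K :: "'a::{topological_ab_group_add, first_countable_topology} set"
  assumes "closed S" "compact K"
  shows "closed {z - k | z k. z \<in> S \<and> k \<in> K}"
  unfolding closed_sequential_limits
proof (intro allI impI, elim conjE)
  fix x l assume x: "\<forall>n. x n \<in> {z - k | z k. z \<in> S \<and> k \<in> K}" and l: "x \<longlonglongrightarrow> l"
  from x have "\<forall>n. \<exists>z k. x n = z - k \<and> z \<in> S \<and> k \<in> K" by blast
  then obtain z k where zk: "\<And>n. x n = z n - k n" "\<And>n. z n \<in> S" "\<And>n. k n \<in> K" by metis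
  obtain k0 r where k0: "k0 \<in> K" "strict_mono r" "(k \<circ> r) \<longlonglongrightarrow> k0"
    using seq_compactE[OF compact_imp_seq_compact[OF assms(2)], of k] zk(3) by blast
  have "(x \<circ> r) \<longlonglongrightarrow> l" using l k0(2) by (rule LIMSEQ_subseq_LIMSEQ)
  then have "(\<lambda>n. (x \<circ> r) n + (k \<circ> r) n) \<longlonglongrightarrow> l + k0" using k0(3) by (intro tendsto_add)
  moreover have "\<And>n. (x \<circ> r) n + (k \<circ> r) n = (z \<circ> r) n" using zk(1) by simp
  ultimately have "(z \<circ> r) \<longlonglongrightarrow> l + k0" by (simp add: comp_def)
  then have "l + k0 \<in> S" using assms(1) zk(2) unfolding closed_sequential_limits by (metis comp_apply)
  then show "l \<in> {z - k | z k. z \<in> S \<and> k \<in> K}" using k0(1)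
    by (intro CollectI exI[of _ "l + k0"] exI[of _ k0]) simp
qed

lemma compact_sum_tg:
  fixes A K :: "'a::topological_ab_group_add set"
  assumes "compact A" "compact K"
  shows "compact {a + k | a k. a \<in> A \<and> k \<in> K}"
proof -
  have "{a + k | a k. a \<in> A \<and> k \<in> K} = (\<lambda>p. fst p + snd p) ` (A \<times> K)" by force
  moreover have "compact ((\<lambda>p. fst p + snd p) ` (A \<times> K))"
    using assms by (intro compact_continuous_image compact_Times continuous_intros)
  ultimately show ?thesis by simp
qed


lemma K_boundary_borel:
  fixes A K :: "'a::{topological_ab_group_add, t2_space, first_countable_topology} set"
  assumes "compact A" "compact K"
  shows "K_boundary K A \<in> sets borel"
    and "K_boundary K A \<subseteq> {a + k | a k. a \<in> A \<and> k \<in> K} \<union> A"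
proof -
  have c1: "closed {a + k | a k. a \<in> A \<and> k \<in> K}"
    using compact_sum_tg[OF assms] by (rule compact_imp_closed)
  have c2: "closed {z - k | z k. z \<in> closure (UNIV - A) \<and> k \<in> K}"
    using closed_diff_compact[OF _ assms(2)] by simp
  show "K_boundary K A \<in> sets borel" unfolding K_boundary_def
    using c1 c2 compact_imp_closed[OF assms(1)]
    by (intro sets.Un sets.Diff sets.Int borel_closed borel_open) auto
  show "K_boundary K A \<subseteq> {a + k | a k. a \<in> A \<and> k \<in> K} \<union> A"
    unfolding K_boundary_def by blast
qed

lemma density_upper:
  fixes vol :: "'a::{topological_ab_group_add, t2_space, second_countable_topology} measure"
    and L :: "'a set"
    and A :: "nat \<Rightarrow> 'a set"
  assumes lc: "locally_compact_space (euclidean :: 'a topology)"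
    and haar: "haar_measure vol"
    and ud: "uniformly_discrete L"
    and vH: "van_Hove vol A"
  shows "\<exists>b. \<forall>\<^sub>F n in sequentially. real (card (L \<inter> A n)) / measure vol (A n) \<le> b"
proof -
  have sv: "sets vol = sets borel" and tr: "\<And>B x. B \<in> sets borel \<Longrightarrow> emeasure vol ((\<lambda>y. x + y) ` B) = emeasure vol B"
    and cf: "\<And>K. compact K \<Longrightarrow> emeasure vol K < \<infinity>"
    and op: "\<And>U. open U \<Longrightarrow> U \<noteq> {} \<Longrightarrow> emeasure vol U > 0"
    using haar unfolding haar_measure_def by auto
  obtain U where U: "open U" "U \<noteq> {}"
    "\<And>t x y. x \<in> L \<Longrightarrow> y \<in> L \<Longrightarrow> x \<in> (\<lambda>u. t + u) ` U \<Longrightarrow> y \<in> (\<lambda>u. t + u) ` U \<Longrightarrow> x = y"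
    using ud unfolding uniformly_discrete_def by blast
  define V where "V = uminus ` U"
  have oV: "open V" unfolding V_def using U(1) by (rule open_neg_tg)
  obtain p where p: "p \<in> V" using U(2) unfolding V_def by blast
  obtain W K0 where WK: "open W" "compact K0" "p \<in> W" "W \<subseteq> K0"
  proof -
    have "p \<in> topspace euclidean" by simp
    from lc[unfolded locally_compact_space_def, rule_format, OF this]
    have "\<exists>W K. openin euclidean W \<and> compactin euclidean K \<and> p \<in> W \<and> W \<subseteq> K" .
    then show ?thesis using that by (metis open_openin compactin_euclidean_iff)
  qed
  define D where "D = W \<inter> V"
  have oD: "open D" using oV WK unfolding D_def by auto
  have Dne: "D \<noteq> {}" using p WK unfolding D_def by auto
  have Dsets: "D \<in> sets vol" using oD sv by simp
  have Dfin: "emeasure vol D < \<infinity>"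
  proof -
    have "emeasure vol D \<le> emeasure vol K0"
      using WK sv compact_imp_closed[OF WK(2)] unfolding D_def by (intro emeasure_mono) auto
    then show ?thesis using cf[OF WK(2)] by simp
  qed
  define \<beta> where "\<beta> = measure vol D"
  have \<beta>pos: "\<beta> > 0" unfolding \<beta>_def using op[OF oD Dne] Dfin
    by (simp add: measure_def enn2real_positive_iff)
  have key: "real (card (L \<inter> A n)) * \<beta> \<le> measure vol (A n) + measure vol (K_boundary K0 (A n))" for n
  proof (cases "finite (L \<inter> A n)")
    case False then show ?thesis by simp
  next
    case True
    define F where "F = L \<inter> A n"
    define T where "T x = (\<lambda>y. x + y) ` D" for x
    have cA: "compact (A n)" using vH unfolding van_Hove_def by blast
    have Tsets: "T x \<in> sets vol" for x
    proof -
      have "T x = (\<lambda>y. y - x) -` D" unfolding T_def by force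
      moreover have "open ((\<lambda>y. y - x) -` D)"
        by (rule open_vimage[OF oD]) (intro continuous_intros)
      ultimately show ?thesis using sv by simp
    qed
    have Tm: "emeasure vol (T x) = emeasure vol D" for x
      unfolding T_def using tr oD by simp
    have disj: "disjoint_family_on T F"
      unfolding disjoint_family_on_def
    proof (intro ballI impI)
      fix x y assume xy: "x \<in> F" "y \<in> F" "x \<noteq> y"
      show "T x \<inter> T y = {}"
      proof (rule ccontr)
        assume "T x \<inter> T y \<noteq> {}"
        then obtain d1 d2 where d: "d1 \<in> D" "d2 \<in> D" "x + d1 = y + d2" unfolding T_def by auto
        then obtain u1 u2 where u: "u1 \<in> U" "u2 \<in> U" "d1 = - u1" "d2 = - u2"
          unfolding D_def V_def by auto
        define t where "t = x + d1"
        have "x = t + u1" unfolding t_def using u by simp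
        moreover have "y = t + u2" unfolding t_def using u d by (simp add: algebra_simps)
        ultimately have "x = y" using U(3)[of x y t] xy u unfolding F_def by blast
        then show False using xy by simp
      qed
    qed
    have "measure vol (\<Union>x\<in>F. T x) = (\<Sum>x\<in>F. measure vol (T x))"
      using True Tsets disj Tm Dfin unfolding F_def by (intro measure_finite_Union) auto
    also have "\<dots> = real (card F) * \<beta>"
      using Tm unfolding \<beta>_def measure_def by simp
    finally have eq: "measure vol (\<Union>x\<in>F. T x) = real (card F) * \<beta>" .
    define S where "S = {a + k | a k. a \<in> A n \<and> k \<in> K0}"
    have cS: "compact S" unfolding S_def using compact_sum_tg[OF cA WK(2)] .
    have sub1: "(\<Union>x\<in>F. T x) \<subseteq> A n \<union> K_boundary K0 (A n)"
    proof -
      have "(\<Union>x\<in>F. T x) \<subseteq> S" unfolding T_def S_def F_def D_def using WK(4) by blast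
      moreover have "S \<subseteq> A n \<union> K_boundary K0 (A n)"
        unfolding S_def K_boundary_def using interior_subset[of "A n"] by blast
      ultimately show ?thesis by blast
    qed
    have Bb: "K_boundary K0 (A n) \<in> sets vol" using K_boundary_borel(1)[OF cA WK(2)] sv by simp
    have Bsub: "K_boundary K0 (A n) \<subseteq> S \<union> A n" using K_boundary_borel(2)[OF cA WK(2)] unfolding S_def .
    have Asets: "A n \<in> sets vol" using compact_imp_closed[OF cA] sv by simp
    have SAc: "compact (S \<union> A n)" using cS cA by auto
    have Bfin: "emeasure vol (K_boundary K0 (A n)) \<noteq> \<infinity>"
    proof -
      have "emeasure vol (K_boundary K0 (A n)) \<le> emeasure vol (S \<union> A n)"
        using Bsub Bb compact_imp_closed[OF SAc] sv by (intro emeasure_mono) auto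
      then show ?thesis using cf[OF SAc] by (auto simp: top_unique)
    qed
    have Afin: "emeasure vol (A n) \<noteq> \<infinity>" using cf[OF cA] by simp
    have ABfin: "emeasure vol (A n \<union> K_boundary K0 (A n)) < \<infinity>"
      using emeasure_subadditive[OF Asets Bb] Afin Bfin
      by (metis ennreal_add_eq_top infinity_ennreal_def le_less_trans less_top)
    have "measure vol (\<Union>x\<in>F. T x) \<le> measure vol (A n \<union> K_boundary K0 (A n))"
      using sub1 Tsets True Asets Bb ABfin unfolding F_def
      by (intro measure_mono_fmeasurable fmeasurableI) (auto simp: sets.finite_UN less_top)
    also have "\<dots> \<le> measure vol (A n) + measure vol (K_boundary K0 (A n))"
      using Asets Bb Afin Bfin by (rule measure_subadditive)
    finally show ?thesis using eq unfolding F_def by simp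
  qed
  have r: "(\<lambda>n. measure vol (K_boundary K0 (A n)) / measure vol (A n)) \<longlonglongrightarrow> 0"
    using vH WK(2) unfolding van_Hove_def by blast
  then have ev: "\<forall>\<^sub>F n in sequentially. measure vol (K_boundary K0 (A n)) / measure vol (A n) < 1"
    by (rule order_tendstoD) simp
  show ?thesis
  proof (intro exI[of _ "2 / \<beta>"] eventually_mono[OF ev])
    fix n assume rn: "measure vol (K_boundary K0 (A n)) / measure vol (A n) < 1"
    have cA: "compact (A n)" and pA: "emeasure vol (A n) > 0" using vH unfolding van_Hove_def by blast+
    have mA: "measure vol (A n) > 0" using pA cf[OF cA]
      by (simp add: measure_def enn2real_positive_iff)
    have "measure vol (K_boundary K0 (A n)) < measure vol (A n)" using rn mA by (simp add: field_simps)
    then have "real (card (L \<inter> A n)) * \<beta> \<le> 2 * measure vol (A n)" using key[of n] by linarith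
    then show "real (card (L \<inter> A n)) / measure vol (A n) \<le> 2 / \<beta>"
      using mA \<beta>pos by (simp add: field_simps)
  qed
qed

lemma cluster_scale:
  fixes c :: "nat \<Rightarrow> real" and I :: "nat \<Rightarrow> 'f \<Rightarrow> real" and J :: "'f \<Rightarrow> real"
  assumes ab: "0 < a" "a \<le> b" and cN: "\<forall>n\<ge>N0. c n \<in> {a..b}"
    and cl: "\<forall>Fs. finite Fs \<and> Fs \<subseteq> S \<longrightarrow> (\<forall>\<epsilon>>0. \<forall>N. \<exists>n\<ge>N. \<forall>f\<in>Fs. \<bar>I n f - J f\<bar> < \<epsilon>)"
  shows "\<exists>C\<in>{a..b}. \<forall>Fs. finite Fs \<and> Fs \<subseteq> S \<longrightarrow>
           (\<forall>\<epsilon>>0. \<forall>N. \<exists>n\<ge>N. \<forall>f\<in>Fs. \<bar>c n * I n f - C * J f\<bar> < \<epsilon>)"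
proof (rule ccontr)
  assume "\<not> ?thesis"
  then have "\<forall>C\<in>{a..b}. \<exists>Fs e N. finite Fs \<and> Fs \<subseteq> S \<and> e > 0 \<and>
      (\<forall>n\<ge>N. \<exists>f\<in>Fs. \<bar>c n * I n f - C * J f\<bar> \<ge> e)"
    by (metis not_le)
  then obtain Fs e Nf where H: "\<And>C. C \<in> {a..b} \<Longrightarrow> finite (Fs C) \<and> Fs C \<subseteq> S \<and> e C > 0 \<and>
      (\<forall>n\<ge>Nf C. \<exists>f\<in>Fs C. \<bar>c n * I n f - C * J f\<bar> \<ge> e C)"
    by metis
  define d where "d C = e C / (2 * (1 + (\<Sum>f\<in>Fs C. \<bar>J f\<bar>)))" for C
  have dpos: "d C > 0" if "C \<in> {a..b}" for C
    using H[OF that] unfolding d_def by (intro divide_pos_pos) (auto intro!: add_pos_nonneg sum_nonneg)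
  have cov: "{a..b} \<subseteq> (\<Union>C\<in>{a..b}. ball C (d C))"
  proof
    fix x assume "x \<in> {a..b}" then show "x \<in> (\<Union>C\<in>{a..b}. ball C (d C))"
      using dpos[of x] by (intro UN_I[of x]) auto
  qed
  have "compact {a..b}" by simp
  then obtain T where T: "T \<subseteq> {a..b}" "finite T" "{a..b} \<subseteq> (\<Union>C\<in>T. ball C (d C))"
    by (rule compactE_image[of "{a..b}" "{a..b}" "\<lambda>C. ball C (d C)"]) (use cov in auto)
  have Tne: "T \<noteq> {}" using T(3) ab by auto
  define Fs' where "Fs' = (\<Union>C\<in>T. Fs C)"
  define eta where "eta = Min (e ` T) / (2 * b)"
  define N' where "N' = max N0 (Max (Nf ` T))"
  have fin: "finite Fs'" "Fs' \<subseteq> S" using T H unfolding Fs'_def by (auto simp: subset_iff)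
  have "Min (e ` T) > 0" using T H Tne by (subst Min_gr_iff) (auto simp: subset_iff)
  then have etapos: "eta > 0" unfolding eta_def using ab by simp
  obtain n where n: "n \<ge> N'" "\<forall>f\<in>Fs'. \<bar>I n f - J f\<bar> < eta"
  proof -
    have "\<forall>\<epsilon>>0. \<forall>N. \<exists>n\<ge>N. \<forall>f\<in>Fs'. \<bar>I n f - J f\<bar> < \<epsilon>"
      using spec[OF cl, of Fs'] fin by simp
    then have "\<exists>n\<ge>N'. \<forall>f\<in>Fs'. \<bar>I n f - J f\<bar> < eta" using etapos by simp
    then show ?thesis using that by blast
  qed
  have cn: "c n \<in> {a..b}" using cN n(1) unfolding N'_def by auto
  then obtain C where C: "C \<in> T" "c n \<in> ball C (d C)" using T(3) by blast
  have CI: "C \<in> {a..b}" using C T by auto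
  have "n \<ge> Nf C" using n(1) C T(2) unfolding N'_def by (meson Max_ge finite_imageI imageI le_trans max.cobounded2)
  then obtain f where f: "f \<in> Fs C" "\<bar>c n * I n f - C * J f\<bar> \<ge> e C" using H[OF CI] by blast
  have fF: "f \<in> Fs'" using f C unfolding Fs'_def by auto
  have eC: "e C > 0" using H[OF CI] by blast
  have etale: "eta \<le> e C / (2 * b)" unfolding eta_def using C T ab
    by (intro divide_right_mono) auto
  define M where "M = (\<Sum>f\<in>Fs C. \<bar>J f\<bar>)"
  have JM: "\<bar>J f\<bar> \<le> M" unfolding M_def using f(1) H[OF CI]
    by (intro member_le_sum) auto
  have M0: "M \<ge> 0" unfolding M_def by (intro sum_nonneg) auto
  have dist: "\<bar>c n - C\<bar> < d C" using C(2) by (simp add: dist_real_def abs_minus_commute)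
  have "\<bar>c n * I n f - C * J f\<bar> = \<bar>c n * (I n f - J f) + (c n - C) * J f\<bar>"
    by (simp add: algebra_simps)
  also have "\<dots> \<le> c n * \<bar>I n f - J f\<bar> + \<bar>c n - C\<bar> * \<bar>J f\<bar>"
    using cn ab by (simp add: abs_mult order_trans[OF abs_triangle_ineq])
  also have "\<dots> < e C"
  proof -
    have 1: "c n * \<bar>I n f - J f\<bar> \<le> b * eta"
      using cn n(2) fF ab by (intro mult_mono) auto
    have 2: "b * eta \<le> e C / 2" using etale ab by (simp add: field_simps)
    have 3: "\<bar>c n - C\<bar> * \<bar>J f\<bar> \<le> d C * M"
      using dist JM by (intro mult_mono) auto
    have 4: "d C * M < e C / 2" unfolding d_def M_def[symmetric] using eC M0
      by (simp add: field_simps)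
    show ?thesis using 1 2 3 4 by linarith
  qed
  finally show False using f(2) by simp
qed

lemma Cc_meas:
  fixes f :: "'a::topological_space \<Rightarrow> real"
  assumes "f \<in> Cc" "sets M = sets borel"
  shows "f \<in> borel_measurable M"
proof -
  have "continuous_on UNIV f" using assms(1) unfolding Cc_def by simp
  then have "f \<in> borel_measurable borel" by (rule borel_measurable_continuous_onI)
  then show ?thesis by (subst measurable_cong_sets[OF assms(2) refl])
qed

lemma radon_scale:
  assumes "radon M" shows "radon (scale_measure (ennreal C) M)"
proof -
  have "emeasure (scale_measure (ennreal C) M) K < \<infinity>" if "compact K" for K
  proof -
    have "emeasure M K < \<infinity>" using assms that unfolding radon_def by blast
    then show ?thesis by (simp add: ennreal_mult_less_top)
  qed
  then show ?thesis using assms unfolding radon_def by simp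
qed

theorem theorem3p10:
  fixes vol :: "'a::{topological_ab_group_add, t2_space, second_countable_topology} measure"
    and L :: "'a set"
    and A :: "nat \<Rightarrow> 'a set"
  assumes lc: "locally_compact_space (euclidean :: 'a topology)"
    and haar: "haar_measure vol"
    and ud: "uniformly_discrete L"
    and vH: "van_Hove vol A"
    and dens: "liminf (\<lambda>n. ereal (real (card (L \<inter> A n)) / measure vol (A n))) > 0"
  shows "(\<forall>gc. vague_cluster_point (\<lambda>n. gamma_count (L \<inter> A n)) gc \<longrightarrow>
            (\<exists>C::real. 0 < C \<and> (\<exists>gd. vague_cluster_point (\<lambda>n. gamma_dens vol (A n) (L \<inter> A n)) gd
                \<and> gd = scale_measure (ennreal C) gc)))
       \<and> (\<forall>gd. vague_cluster_point (\<lambda>n. gamma_dens vol (A n) (L \<inter> A n)) gd \<longrightarrow>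
            (\<exists>D::real. 0 < D \<and> (\<exists>gc. vague_cluster_point (\<lambda>n. gamma_count (L \<inter> A n)) gc
                \<and> gc = scale_measure (ennreal D) gd)))"
proof -
  define c where "c n = real (card (L \<inter> A n)) / measure vol (A n)" for n
  have mA: "measure vol (A n) > 0" for n
  proof -
    have cf: "\<And>K. compact K \<Longrightarrow> emeasure vol K < \<infinity>" using haar unfolding haar_measure_def by blast
    have cA: "compact (A n)" and pA: "emeasure vol (A n) > 0" using vH unfolding van_Hove_def by blast+
    show ?thesis using pA cf[OF cA] by (simp add: measure_def enn2real_positive_iff)
  qed
  obtain a0 where a0: "0 < ereal a0" "ereal a0 < liminf (\<lambda>n. ereal (c n))"
    using ereal_dense2[OF dens[folded c_def]] by blast
  have "\<forall>\<^sub>F n in sequentially. ereal (c n) > ereal a0" using a0(2) by (rule less_LiminfD)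
  then obtain N1 where N1: "\<And>n. n \<ge> N1 \<Longrightarrow> a0 < c n" by (auto simp: eventually_sequentially)
  obtain b where "\<forall>\<^sub>F n in sequentially. c n \<le> b"
    using density_upper[OF lc haar ud vH] unfolding c_def by blast
  then obtain N2 where N2: "\<And>n. n \<ge> N2 \<Longrightarrow> c n \<le> b" by (auto simp: eventually_sequentially)
  have a0pos: "a0 > 0" using a0(1) by simp
  define b' where "b' = max a0 b"
  define N0 where "N0 = max N1 N2"
  have cN: "\<forall>n\<ge>N0. c n \<in> {a0..b'}"
  proof (intro allI impI)
    fix n assume "n \<ge> N0"
    then have "n \<ge> N1" "n \<ge> N2" unfolding N0_def by auto
    then have "a0 < c n" "c n \<le> b" using N1 N2 by auto
    then show "c n \<in> {a0..b'}" unfolding b'_def by auto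
  qed
  define X where "X n (f :: 'a \<Rightarrow> real) = integral\<^sup>L (distr (count_space ((L \<inter> A n) \<times> (L \<inter> A n))) borel (\<lambda>(x, y). x - y)) f" for n f
  have Xm: "f \<in> borel_measurable (distr (count_space ((L \<inter> A n) \<times> (L \<inter> A n))) borel (\<lambda>(x, y). x - y))"
    if "f \<in> Cc" for f n using Cc_meas[OF that] by simp
  have Igc: "integral\<^sup>L (gamma_count (L \<inter> A n)) f = (1 / real (card (L \<inter> A n))) * X n f"
    if "f \<in> Cc" for f n
    unfolding gamma_count_def X_def by (rule integral_scale_ennreal[OF _ Xm[OF that]]) simp
  have Igd: "integral\<^sup>L (gamma_dens vol (A n) (L \<inter> A n)) f = (1 / measure vol (A n)) * X n f"
    if "f \<in> Cc" for f n
    unfolding gamma_dens_def X_def by (rule integral_scale_ennreal[OF _ Xm[OF that]]) simp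
  have cpos: "c n > 0" if "n \<ge> N1" for n using N1[OF that] a0pos by simp
  have card0: "real (card (L \<inter> A n)) \<noteq> 0" if "n \<ge> N1" for n
    using cpos[OF that] unfolding c_def by (metis div_0 less_irrefl)
  have rel1: "integral\<^sup>L (gamma_dens vol (A n) (L \<inter> A n)) f = c n * integral\<^sup>L (gamma_count (L \<inter> A n)) f"
    if "f \<in> Cc" "n \<ge> N1" for f n
  proof -
    have "1 / measure vol (A n) = c n * (1 / real (card (L \<inter> A n)))"
      unfolding c_def using card0[OF that(2)] by simp
    then show ?thesis unfolding Igc[OF that(1)] Igd[OF that(1)] by (simp only: mult.assoc)
  qed
  have rel2: "integral\<^sup>L (gamma_count (L \<inter> A n)) f = (1 / c n) * integral\<^sup>L (gamma_dens vol (A n) (L \<inter> A n)) f"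
    if "f \<in> Cc" "n \<ge> N1" for f n
    unfolding rel1[OF that] using cpos[OF that(2)] by (simp only: mult.assoc[symmetric]) simp
  have ab: "0 < a0" "a0 \<le> b'" using a0pos unfolding b'_def by auto
  show ?thesis
  proof (intro conjI allI impI)
    fix gc assume vc: "vague_cluster_point (\<lambda>n. gamma_count (L \<inter> A n)) gc"
    have rg: "radon gc" using vc unfolding vague_cluster_point_def by (rule conjunct1)
    have cl: "\<forall>Fs. finite Fs \<and> Fs \<subseteq> Cc \<longrightarrow> (\<forall>\<epsilon>>0. \<forall>N. \<exists>n\<ge>N. \<forall>f\<in>Fs.
        \<bar>integral\<^sup>L (gamma_count (L \<inter> A n)) f - integral\<^sup>L gc f\<bar> < \<epsilon>)"
      using vc unfolding vague_cluster_point_def by (rule conjunct2)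
    obtain C where C: "C \<in> {a0..b'}" and CC: "\<forall>Fs. finite Fs \<and> Fs \<subseteq> Cc \<longrightarrow> (\<forall>\<epsilon>>0. \<forall>N. \<exists>n\<ge>N. \<forall>f\<in>Fs.
        \<bar>c n * integral\<^sup>L (gamma_count (L \<inter> A n)) f - C * integral\<^sup>L gc f\<bar> < \<epsilon>)"
      using cluster_scale[OF ab cN cl] by (elim bexE) (rule that)
    have Cpos: "C > 0" using C a0pos by simp
    have "vague_cluster_point (\<lambda>n. gamma_dens vol (A n) (L \<inter> A n)) (scale_measure (ennreal C) gc)"
      unfolding vague_cluster_point_def
    proof (intro conjI allI impI radon_scale[OF rg])
      fix Fs :: "('a \<Rightarrow> real) set" and \<epsilon> :: real and N
      assume Fs: "finite Fs \<and> Fs \<subseteq> Cc" and e: "\<epsilon> > 0"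
      let ?P = "\<lambda>n f \<epsilon>. \<bar>c n * integral\<^sup>L (gamma_count (L \<inter> A n)) f - C * integral\<^sup>L gc f\<bar> < \<epsilon>"
      obtain n where n: "n \<ge> max N N1" "\<forall>f\<in>Fs. \<bar>c n * integral\<^sup>L (gamma_count (L \<inter> A n)) f - C * integral\<^sup>L gc f\<bar> < \<epsilon>"
      proof -
        have "\<forall>\<epsilon>>0. \<forall>N. \<exists>n\<ge>N. \<forall>f\<in>Fs. ?P n f \<epsilon>"
          using spec[OF CC, of Fs] Fs by simp
        then have "\<forall>N. \<exists>n\<ge>N. \<forall>f\<in>Fs. ?P n f \<epsilon>" using e by simp
        then have "\<exists>n\<ge>max N N1. \<forall>f\<in>Fs. ?P n f \<epsilon>" by (rule spec)
        then show ?thesis using that by blast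
      qed
      show "\<exists>n\<ge>N. \<forall>f\<in>Fs. \<bar>integral\<^sup>L (gamma_dens vol (A n) (L \<inter> A n)) f - integral\<^sup>L (scale_measure (ennreal C) gc) f\<bar> < \<epsilon>"
      proof (intro exI[of _ n] conjI ballI)
        show "n \<ge> N" using n(1) by simp
        fix f assume f: "f \<in> Fs"
        then have fC: "f \<in> Cc" using Fs by blast
        have "integral\<^sup>L (scale_measure (ennreal C) gc) f = C * integral\<^sup>L gc f"
          using rg Cpos fC by (intro integral_scale_ennreal Cc_meas) (auto simp: radon_def)
        then show "\<bar>integral\<^sup>L (gamma_dens vol (A n) (L \<inter> A n)) f - integral\<^sup>L (scale_measure (ennreal C) gc) f\<bar> < \<epsilon>"
          using rel1[OF fC, of n] n f by simp
      qed
    qed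
    then show "\<exists>C::real. 0 < C \<and> (\<exists>gd. vague_cluster_point (\<lambda>n. gamma_dens vol (A n) (L \<inter> A n)) gd
                \<and> gd = scale_measure (ennreal C) gc)" using Cpos by blast
  next
    fix gd assume vc: "vague_cluster_point (\<lambda>n. gamma_dens vol (A n) (L \<inter> A n)) gd"
    have rg: "radon gd" using vc unfolding vague_cluster_point_def by (rule conjunct1)
    have cl: "\<forall>Fs. finite Fs \<and> Fs \<subseteq> Cc \<longrightarrow> (\<forall>\<epsilon>>0. \<forall>N. \<exists>n\<ge>N. \<forall>f\<in>Fs.
        \<bar>integral\<^sup>L (gamma_dens vol (A n) (L \<inter> A n)) f - integral\<^sup>L gd f\<bar> < \<epsilon>)"
      using vc unfolding vague_cluster_point_def by (rule conjunct2)
    have ab': "0 < 1 / b'" "1 / b' \<le> 1 / a0" using ab by (auto simp: field_simps)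
    have cN': "\<forall>n\<ge>N0. 1 / c n \<in> {1 / b'..1 / a0}"
      using cN ab by (auto simp: frac_le)
    obtain D where D: "D \<in> {1 / b'..1 / a0}" and DD: "\<forall>Fs. finite Fs \<and> Fs \<subseteq> Cc \<longrightarrow> (\<forall>\<epsilon>>0. \<forall>N. \<exists>n\<ge>N. \<forall>f\<in>Fs.
        \<bar>1 / c n * integral\<^sup>L (gamma_dens vol (A n) (L \<inter> A n)) f - D * integral\<^sup>L gd f\<bar> < \<epsilon>)"
      using cluster_scale[OF ab' cN' cl] by (elim bexE) (rule that)
    have Dpos: "D > 0" using D ab'(1) by (meson atLeastAtMost_iff less_le_trans)
    have "vague_cluster_point (\<lambda>n. gamma_count (L \<inter> A n)) (scale_measure (ennreal D) gd)"
      unfolding vague_cluster_point_def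
    proof (intro conjI allI impI radon_scale[OF rg])
      fix Fs :: "('a \<Rightarrow> real) set" and \<epsilon> :: real and N
      assume Fs: "finite Fs \<and> Fs \<subseteq> Cc" and e: "\<epsilon> > 0"
      let ?P = "\<lambda>n f \<epsilon>. \<bar>1 / c n * integral\<^sup>L (gamma_dens vol (A n) (L \<inter> A n)) f - D * integral\<^sup>L gd f\<bar> < \<epsilon>"
      obtain n where n: "n \<ge> max N N1" "\<forall>f\<in>Fs. \<bar>1 / c n * integral\<^sup>L (gamma_dens vol (A n) (L \<inter> A n)) f - D * integral\<^sup>L gd f\<bar> < \<epsilon>"
      proof -
        have "\<forall>\<epsilon>>0. \<forall>N. \<exists>n\<ge>N. \<forall>f\<in>Fs. ?P n f \<epsilon>"
          using spec[OF DD, of Fs] Fs by simp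
        then have "\<forall>N. \<exists>n\<ge>N. \<forall>f\<in>Fs. ?P n f \<epsilon>" using e by simp
        then have "\<exists>n\<ge>max N N1. \<forall>f\<in>Fs. ?P n f \<epsilon>" by (rule spec)
        then show ?thesis using that by blast
      qed
      show "\<exists>n\<ge>N. \<forall>f\<in>Fs. \<bar>integral\<^sup>L (gamma_count (L \<inter> A n)) f - integral\<^sup>L (scale_measure (ennreal D) gd) f\<bar> < \<epsilon>"
      proof (intro exI[of _ n] conjI ballI)
        show "n \<ge> N" using n(1) by simp
        fix f assume f: "f \<in> Fs"
        then have fC: "f \<in> Cc" using Fs by blast
        have "integral\<^sup>L (scale_measure (ennreal D) gd) f = D * integral\<^sup>L gd f"
          using rg Dpos fC by (intro integral_scale_ennreal Cc_meas) (auto simp: radon_def)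
        then show "\<bar>integral\<^sup>L (gamma_count (L \<inter> A n)) f - integral\<^sup>L (scale_measure (ennreal D) gd) f\<bar> < \<epsilon>"
          using rel2[OF fC, of n] n f by simp
      qed
    qed
    then show "\<exists>D::real. 0 < D \<and> (\<exists>gc. vague_cluster_point (\<lambda>n. gamma_count (L \<inter> A n)) gc
                \<and> gc = scale_measure (ennreal D) gd)" using Dpos by blast
  qed
qed

end
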